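(* Let $\mu_0,\nu_0\in\mathcal P_c^*(\mathbb R^2)$ satisfy $\mathcal N_{\mathrm m}[\mu_0]\neq\mathcal N_{\mathrm m}[\nu_0]$, and consider the classes $$\mathbb F=\{(\mathbf A\cdot+\mathbf y)_\#\mu_0 : \mathbf A\in\mathrm{GL}(2),\ \mathbf y\in\mathbb R^2\},\qquad \mathbb G=\{(\mathbf A\cdot+\mathbf y)_\#\nu_0 : \mathbf A\in\mathrm{GL}(2),\ \mathbf y\in\mathbb R^2\}.$$ Then $\mathbb F\subset\mathcal P_c^*(\mathbb R^2)$ and $\mathbb G\subset\mathcal P_c^*(\mathbb R^2)$, and $\mathbb F$ and $\mathbb G$ are linearly separable in max-normalized R-CDT space, i.e. the sets $\mathcal N_{\mathrm m}[\mathbb F]$ and $\mathcal N_{\mathrm m}[\mathbb G]$ are linearly separable in $L^\infty_\rho(\mathbb R)$.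
   Context: Let $\mathbb S_1=\{x\in\mathbb R^2:\|x\|=1\}$. For $\theta\in\mathbb S_1$ let $S_\theta(x)=\langle x,\theta\rangle$ and, for a finite Borel measure $\mu$ on $\mathbb R^2$, let $\mathcal R_\theta[\mu]=(S_\theta)_\#\mu$ (pushforward measure on $\mathbb R$). Fix a reference Borel probability measure $\rho$ on $\mathbb R$ that has no atoms. For a probability measure $\nu$ on $\mathbb R$ with distribution function $F_\nu(t)=\nu((-\infty,t])$, set $F_\nu^{[-1]}(t)=\inf\{s\in\mathbb R: F_\nu(s)>t\}$ and define its cumulative distribution transform (CDT) $\hat\nu=F_\nu^{[-1]}\circ F_\rho$. Write $\widehat{\mathcal R}_\theta[\mu]$ for the CDT of $\mathcal R_\theta[\mu]$. For $g\in L^2_\rho(\mathbb R)$ let $\operatorname{mean}(g)=\int_{\mathbb R}g\,\mathrm d\rho$ and $\operatorname{std}(g)=\big(\int_{\mathbb R}|g-\operatorname{mean}(g)|^2\,\mathrm d\rho\big)^{1/2}$. Let $\mathcal P_c^*(\mathbb R^2)$ denote the set of Borel probability measures on $\mathbb R^2$ with compact support such that the affine hull of the support has dimension $>1$ (the support is not contained in a line). For $\mu\in\mathcal P_c^*(\mathbb R^2)$, $\theta\in\mathbb S_1$, $t\in\mathbb R$, the normalized R-CDT is $\mathcal N_\theta[\mu](t)=\big(\widehat{\mathcal R}_\theta[\mu](t)-\operatorname{mean}(\widehat{\mathcal R}_\theta[\mu])\big)/\operatorname{std}(\widehat{\mathcal R}_\theta[\mu])$, and the max-normalized R-CDT is $\mathcal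 N_{\mathrm m}[\mu](t)=\sup_{\theta\in\mathbb S_1}\mathcal N_\theta[\mu](t)$. Two subsets $A,B$ of a normed space $V$ are linearly separable if there exist a continuous linear functional $\ell$ on $V$ and $c\in\mathbb R$ with $\ell(a)>c$ for all $a\in A$ and $\ell(b)<c$ for all $b\in B$. *)

theory Defs
  imports "HOL-Probability.Probability"
begin

definition msupport :: "'a::metric_space measure \<Rightarrow> 'a set" where
  "msupport \<mu> = {x. \<forall>e>0. emeasure \<mu> (ball x e) > 0}"

definition Pc_star :: "(real^2) measure set" where
  "Pc_star = {\<mu>. prob_space \<mu> \<and> sets \<mu> = sets borel \<and>
                 compact (msupport \<mu>) \<and> aff_dim (msupport \<mu>) > 1}"

definition affine_orbit :: "(real^2) measure \<Rightarrow> (real^2) measure set" where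
  "affine_orbit \<mu> = {distr \<mu> borel (\<lambda>x. A *v x + y) | A y. invertible (A :: real^2^2)}"

definition radon :: "real^2 \<Rightarrow> (real^2) measure \<Rightarrow> real measure" where
  "radon \<theta> \<mu> = distr \<mu> borel (\<lambda>x. x \<bullet> \<theta>)"

definition cdf :: "real measure \<Rightarrow> real \<Rightarrow> real" where
  "cdf \<nu> t = measure \<nu> {..t}"

definition gen_inv :: "real measure \<Rightarrow> real \<Rightarrow> real" where
  "gen_inv \<nu> t = Inf {s. cdf \<nu> s > t}"

definition cdt :: "real measure \<Rightarrow> real measure \<Rightarrow> real \<Rightarrow> real" where
  "cdt \<rho> \<nu> = gen_inv \<nu> \<circ> cdf \<rho>"

definition rmean :: "real measure \<Rightarrow> (real \<Rightarrow> real) \<Rightarrow> real" where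
  "rmean \<rho> g = (\<integral>x. g x \<partial>\<rho>)"

definition rstd :: "real measure \<Rightarrow> (real \<Rightarrow> real) \<Rightarrow> real" where
  "rstd \<rho> g = sqrt (\<integral>x. \<bar>g x - rmean \<rho> g\<bar>^2 \<partial>\<rho>)"

definition NR :: "real measure \<Rightarrow> real^2 \<Rightarrow> (real^2) measure \<Rightarrow> real \<Rightarrow> real" where
  "NR \<rho> \<theta> \<mu> t = (cdt \<rho> (radon \<theta> \<mu>) t - rmean \<rho> (cdt \<rho> (radon \<theta> \<mu>)))
                     / rstd \<rho> (cdt \<rho> (radon \<theta> \<mu>))"

definition NRmax :: "real measure \<Rightarrow> (real^2) measure \<Rightarrow> real \<Rightarrow> real" where
  "NRmax \<rho> \<mu> t = (SUP \<theta>\<in>sphere 0 1. NR \<rho> \<theta> \<mu> t)"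

text \<open>Representatives of elements of \<open>L^\<infinity>_\<rho>(R)\<close>.\<close>
definition Linf :: "real measure \<Rightarrow> (real \<Rightarrow> real) set" where
  "Linf \<rho> = {f. f \<in> borel_measurable \<rho> \<and> (\<exists>C. AE x in \<rho>. \<bar>f x\<bar> \<le> C)}"

text \<open>Continuous linear functionals on \<open>L^\<infinity>_\<rho>\<close>, given on representatives:
linear, and bounded w.r.t. the essential sup norm (boundedness forces the functional
to agree on a.e.-equal representatives, so it is well defined on the quotient).\<close>
definition Linf_functional :: "real measure \<Rightarrow> ((real \<Rightarrow> real) \<Rightarrow> real) \<Rightarrow> bool" where
  "Linf_functional \<rho> L \<longleftrightarrow>
     (\<forall>f\<in>Linf \<rho>. \<forall>g\<in>Linf \<rho>. L (\<lambda>x. f x + g x) = L f + L g) \<and>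
     (\<forall>f\<in>Linf \<rho>. \<forall>c. L (\<lambda>x. c * f x) = c * L f) \<and>
     (\<exists>K. \<forall>f\<in>Linf \<rho>. \<forall>B. (AE x in \<rho>. \<bar>f x\<bar> \<le> B) \<longrightarrow> \<bar>L f\<bar> \<le> K * B)"

definition Linf_lin_separable ::
    "real measure \<Rightarrow> (real \<Rightarrow> real) set \<Rightarrow> (real \<Rightarrow> real) set \<Rightarrow> bool" where
  "Linf_lin_separable \<rho> A B \<longleftrightarrow> A \<subseteq> Linf \<rho> \<and> B \<subseteq> Linf \<rho> \<and>
     (\<exists>L c. Linf_functional \<rho> L \<and> (\<forall>a\<in>A. L a > c) \<and> (\<forall>b\<in>B. L b < c))"

end

theory Submission
  imports Defs
begin


lemma cdf_eq_lib: "Defs.cdf = Distribution_Functions.cdf"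
  by (auto simp: Defs.cdf_def Distribution_Functions.cdf_def fun_eq_iff)

locale refm = real_distribution \<rho> for \<rho> :: "real measure" +
  assumes atomless: "\<And>t. measure \<rho> {t} = 0"
begin

abbreviation "F \<equiv> Distribution_Functions.cdf \<rho>"

lemma F_cont: "continuous_on UNIV F"
  using isCont_cdf atomless by (simp add: continuous_on_eq_continuous_at)

lemma F_mono: "mono F" by (simp add: cdf_nondecreasing monoI)

lemma F_meas[measurable]: "F \<in> borel_measurable borel"
  by (rule borel_measurable_mono[OF F_mono])

lemma B1:
  assumes "c \<le> 1"
  shows "c \<le> measure \<rho> {t. F t < c}"
proof (cases "c \<le> 0")
  case True then show ?thesis using measure_nonneg[of \<rho>] by (meson order_trans)
next
  case False
  let ?S = "{t. F t < c}"
  show ?thesis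
  proof (cases "?S = UNIV")
    case True then show ?thesis using assms prob_space by simp
  next
    case nS: False
    let ?C = "{t. c \<le> F t}"
    have Cne: "?C \<noteq> {}" using nS by (force simp: not_le)
    have "closed ?C" using F_cont
      by (intro closed_Collect_le) (auto intro: continuous_intros)
    have "\<forall>\<^sub>F x in at_bot. F x < c" using cdf_lim_at_bot False
      by (intro order_tendstoD(2)) auto
    then obtain b where b: "\<And>x. x \<le> b \<Longrightarrow> F x < c" by (auto simp: eventually_at_bot_linorder)
    have bdd: "bdd_below ?C" unfolding bdd_below_def
      by (rule exI[of _ b]) (metis b mem_Collect_eq not_le nle_le)
    define T where "T = Inf ?C"
    have TC: "T \<in> ?C" using closed_contains_Inf[OF Cne bdd \<open>closed ?C\<close>] T_def by simp
    have sub: "{..<T} \<subseteq> ?S"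
    proof
      fix t assume "t \<in> {..<T}"
      then have "t < Inf ?C" by (simp add: T_def)
      then have "t \<notin> ?C" using cInf_lower[OF _ bdd] by force
      then show "t \<in> ?S" by simp
    qed
    have "measure \<rho> {..<T} = F T"
    proof -
      have e: "{..T} = {..<T} \<union> {T}" by auto
      have "measure \<rho> ({..<T} \<union> {T}) = measure \<rho> {..<T} + measure \<rho> {T}"
        by (rule finite_measure_Union) auto
      then have "measure \<rho> {..T} = measure \<rho> {..<T} + measure \<rho> {T}"
        using e by simp
      then show ?thesis using atomless by (simp add: cdf_def2)
    qed
    then have "c \<le> measure \<rho> {..<T}" using TC by simp
    also have "\<dots> \<le> measure \<rho> ?S" using sub by (intro finite_measure_mono) auto
    finally show ?thesis .
  qed
qed

lemma B2:
  assumes "0 \<le> c"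
  shows "measure \<rho> {t. F t \<le> c} \<le> c"
proof (cases "1 \<le> c")
  case True then show ?thesis using prob_le_1 by (meson order_trans)
next
  case False
  let ?S = "{t. F t \<le> c}"
  show ?thesis
  proof (cases "?S = {}")
    case True then show ?thesis using assms by simp
  next
    case ne: False
    have "closed ?S" using F_cont
      by (intro closed_Collect_le) (auto intro: continuous_intros)
    have "\<forall>\<^sub>F x in at_top. F x > c" using cdf_lim_at_top_prob False
      by (intro order_tendstoD(1)) auto
    then obtain b where b: "\<And>x. x \<ge> b \<Longrightarrow> F x > c" by (auto simp: eventually_at_top_linorder)
    have bdd: "bdd_above ?S" unfolding bdd_above_def
      by (rule exI[of _ b]) (metis b mem_Collect_eq not_le nle_le)
    define T where "T = Sup ?S"
    have TS: "T \<in> ?S" using closed_contains_Sup[OF ne bdd \<open>closed ?S\<close>] T_def by simp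
    have sub: "?S \<subseteq> {..T}" using cSup_upper[OF _ bdd] T_def by auto
    have "measure \<rho> ?S \<le> measure \<rho> {..T}" using sub by (intro finite_measure_mono) auto
    also have "\<dots> = F T" by (simp add: cdf_def2)
    also have "\<dots> \<le> c" using TS by simp
    finally show ?thesis .
  qed
qed

definition "E = {t. 1 \<le> F t}"

lemma E_meas[measurable]: "E \<in> sets borel" unfolding E_def by measurable

lemma E_null: "E \<in> null_sets \<rho>"
proof -
  have "1 \<le> measure \<rho> {t. F t < 1}" using B1 by simp
  moreover have "{t. F t < 1} = space \<rho> - E" by (auto simp: E_def)
  ultimately have "measure \<rho> E \<le> 0"
    using prob_compl[of E] E_meas by simp
  then have "measure \<rho> E = 0" by (simp add: antisym)
  then show ?thesis using E_meas by (simp add: null_sets_def emeasure_eq_measure)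
qed

lemma AE_notE: "AE t in \<rho>. t \<notin> E"
  using E_null AE_not_in by blast


lemma Fle1: "F t \<le> 1" by (rule cdf_bounded_prob)

lemma notE_iff: "t \<notin> E \<longleftrightarrow> F t < 1" by (auto simp: E_def)

end

definition nice :: "real measure \<Rightarrow> real \<Rightarrow> real \<Rightarrow> bool" where
  "nice \<nu> s0 s1 \<longleftrightarrow> real_distribution \<nu> \<and> Defs.cdf \<nu> s0 = 0 \<and> Defs.cdf \<nu> s1 = 1"

context
  fixes \<nu> s0 s1 assumes nc: "nice \<nu> s0 s1"
begin

interpretation N: real_distribution \<nu> using nc by (simp add: nice_def)

lemma nice_F0: "Distribution_Functions.cdf \<nu> s0 = 0" using nc by (simp add: nice_def cdf_eq_lib)
lemma nice_F1: "Distribution_Functions.cdf \<nu> s1 = 1" using nc by (simp add: nice_def cdf_eq_lib)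

lemma gen_inv_set:
  assumes "0 \<le> u" "u < 1"
  shows "s1 \<in> {s. Distribution_Functions.cdf \<nu> s > u}"
    and "\<And>s. s \<in> {s. Distribution_Functions.cdf \<nu> s > u} \<Longrightarrow> s0 \<le> s"
proof -
  show "s1 \<in> {s. Distribution_Functions.cdf \<nu> s > u}" using nice_F1 assms by simp
  fix s assume "s \<in> {s. Distribution_Functions.cdf \<nu> s > u}"
  then have "Distribution_Functions.cdf \<nu> s > 0" using assms by simp
  then show "s0 \<le> s" using N.cdf_nondecreasing[of s s0] nice_F0 by fastforce
qed

lemma gen_inv_eq: "gen_inv \<nu> u = Inf {s. Distribution_Functions.cdf \<nu> s > u}"
  by (simp add: gen_inv_def cdf_eq_lib)

lemma gen_inv_bounds:
  assumes "0 \<le> u" "u < 1"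
  shows "s0 \<le> gen_inv \<nu> u" "gen_inv \<nu> u \<le> s1"
proof -
  have bdd: "bdd_below {s. Distribution_Functions.cdf \<nu> s > u}"
    using gen_inv_set(2)[OF assms] by (auto simp: bdd_below_def)
  show "gen_inv \<nu> u \<le> s1" unfolding gen_inv_eq
    by (rule cInf_lower[OF gen_inv_set(1)[OF assms] bdd])
  show "s0 \<le> gen_inv \<nu> u" unfolding gen_inv_eq
    by (rule cInf_greatest) (use gen_inv_set[OF assms] in auto)
qed

lemma gen_inv_mono:
  assumes "0 \<le> u" "u \<le> v" "v < 1"
  shows "gen_inv \<nu> u \<le> gen_inv \<nu> v"
proof -
  have bdd: "bdd_below {s. Distribution_Functions.cdf \<nu> s > u}"
    using gen_inv_set(2)[of u] assms by (auto simp: bdd_below_def)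
  show ?thesis unfolding gen_inv_eq
    by (rule cInf_superset_mono) (use gen_inv_set(1)[of v] assms bdd in auto)
qed

lemma galois1:
  assumes "0 \<le> u" "u < Distribution_Functions.cdf \<nu> x"
  shows "gen_inv \<nu> u \<le> x"
proof -
  have u1: "u < 1" using assms N.cdf_bounded_prob[of x] by simp
  have bdd: "bdd_below {s. Distribution_Functions.cdf \<nu> s > u}"
    using gen_inv_set(2)[OF assms(1) u1] by (auto simp: bdd_below_def)
  show ?thesis unfolding gen_inv_eq by (rule cInf_lower) (use assms bdd in auto)
qed

lemma galois2:
  assumes "0 \<le> u" "u < 1" "gen_inv \<nu> u \<le> x"
  shows "u \<le> Distribution_Functions.cdf \<nu> x"
proof (rule ccontr)
  assume "\<not> ?thesis"
  then have lt: "Distribution_Functions.cdf \<nu> x < u" by simp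
  have "\<forall>\<^sub>F y in at_right x. Distribution_Functions.cdf \<nu> y < u"
    using N.cdf_is_right_cont[of x] lt unfolding continuous_within
    by (intro order_tendstoD(2)) auto
  then obtain d where d: "d > x" "\<And>y. x < y \<Longrightarrow> y < d \<Longrightarrow> Distribution_Functions.cdf \<nu> y < u"
    by (auto simp: eventually_at_right_field)
  have "(x + d) / 2 \<le> gen_inv \<nu> u" unfolding gen_inv_eq
  proof (rule cInf_greatest)
    show "{s. u < Distribution_Functions.cdf \<nu> s} \<noteq> {}" using gen_inv_set(1)[OF assms(1,2)] by auto
    fix s assume s: "s \<in> {s. u < Distribution_Functions.cdf \<nu> s}"
    show "(x + d) / 2 \<le> s"
    proof (rule ccontr)
      assume "\<not> ?thesis"
      then have "s < (x+d)/2" by simp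
      then have "Distribution_Functions.cdf \<nu> s \<le> Distribution_Functions.cdf \<nu> ((x+d)/2)"
        by (intro N.cdf_nondecreasing) simp
      also have "\<dots> < u" using d by (intro d(2)) auto
      finally show False using s by simp
    qed
  qed
  then show False using assms(3) d(1) by simp
qed

lemma gen_inv_scale:
  assumes "0 \<le> u" "u < 1" "a > 0"
  shows "gen_inv (distr \<nu> borel (\<lambda>s. a * s + b)) u = a * gen_inv \<nu> u + b"
proof -
  have cd: "Distribution_Functions.cdf (distr \<nu> borel (\<lambda>s. a * s + b)) s
      = Distribution_Functions.cdf \<nu> ((s - b) / a)" for s
  proof -
    have "(\<lambda>x. a * x + b) -` {..s} \<inter> space \<nu> = {..(s-b)/a}"
      using assms(3) by (auto simp: field_simps)
    then show ?thesis
      by (simp add: cdf_def2 measure_distr)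
  qed
  have "{s. u < Distribution_Functions.cdf (distr \<nu> borel (\<lambda>s. a * s + b)) s}
      = (\<lambda>v. a * v + b) ` {s. u < Distribution_Functions.cdf \<nu> s}"
  proof (rule set_eqI, rule iffI)
    fix s assume "s \<in> {s. u < Distribution_Functions.cdf (distr \<nu> borel (\<lambda>s. a * s + b)) s}"
    then have "(s-b)/a \<in> {s. u < Distribution_Functions.cdf \<nu> s}" by (simp add: cd)
    moreover have "s = a * ((s-b)/a) + b" using assms(3) by simp
    ultimately show "s \<in> (\<lambda>v. a * v + b) ` {s. u < Distribution_Functions.cdf \<nu> s}" by blast
  qed (use assms(3) in \<open>auto simp: cd\<close>)
  then have "gen_inv (distr \<nu> borel (\<lambda>s. a * s + b)) u
      = Inf ((\<lambda>v. a * v + b) ` {s. u < Distribution_Functions.cdf \<nu> s})"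
    by (simp add: gen_inv_def cdf_eq_lib)
  also have "\<dots> = a * Inf {s. u < Distribution_Functions.cdf \<nu> s} + b"
  proof (rule continuous_at_Inf_mono[symmetric])
    show "mono (\<lambda>v. a * v + b)" using assms(3) by (auto intro!: monoI)
    show "continuous (at_right (Inf {s. u < Distribution_Functions.cdf \<nu> s})) (\<lambda>v. a * v + b)"
      by (intro continuous_intros)
    show "{s. u < Distribution_Functions.cdf \<nu> s} \<noteq> {}" using gen_inv_set(1)[OF assms(1,2)] by auto
    show "bdd_below {s. u < Distribution_Functions.cdf \<nu> s}"
      using gen_inv_set(2)[OF assms(1,2)] by (auto simp: bdd_below_def)
  qed
  finally show ?thesis by (simp add: gen_inv_eq)
qed

end


context refm begin

lemma Defs_cdf_rho: "Defs.cdf \<rho> = F" by (simp add: cdf_eq_lib)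

context fixes \<nu> s0 s1 assumes nc: "nice \<nu> s0 s1"
begin

interpretation N: real_distribution \<nu> using nc by (simp add: nice_def)

lemma cdt_notE: "t \<notin> E \<Longrightarrow> cdt \<rho> \<nu> t = gen_inv \<nu> (F t)"
  by (simp add: cdt_def Defs_cdf_rho)

lemma cdt_E: "t \<in> E \<Longrightarrow> cdt \<rho> \<nu> t = gen_inv \<nu> 1"
  using Fle1[of t] by (simp add: cdt_def Defs_cdf_rho E_def)

lemma F_nonneg: "0 \<le> F t" by (rule cdf_nonneg)

lemma cdt_bounds: "t \<notin> E \<Longrightarrow> s0 \<le> cdt \<rho> \<nu> t \<and> cdt \<rho> \<nu> t \<le> s1"
  using gen_inv_bounds[OF nc F_nonneg[of t]] by (simp add: cdt_notE notE_iff)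

lemma cdt_mono: "t1 \<le> t2 \<Longrightarrow> t2 \<notin> E \<Longrightarrow> cdt \<rho> \<nu> t1 \<le> cdt \<rho> \<nu> t2"
proof -
  assume a: "t1 \<le> t2" "t2 \<notin> E"
  then have "F t1 \<le> F t2" using F_mono by (simp add: monoD)
  moreover have "F t2 < 1" using a notE_iff by simp
  ultimately have "t1 \<notin> E" using notE_iff by simp
  then show ?thesis using a gen_inv_mono[OF nc F_nonneg[of t1] \<open>F t1 \<le> F t2\<close>] notE_iff
    by (simp add: cdt_notE)
qed

lemma cdt_meas[measurable]: "cdt \<rho> \<nu> \<in> borel_measurable borel"
proof -
  define h where "h t = (if F t < 1 then cdt \<rho> \<nu> t else s1)" for t
  have "mono h"
  proof (rule monoI)
    fix t1 t2 :: real assume le: "t1 \<le> t2"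
    show "h t1 \<le> h t2"
    proof (cases "F t2 < 1")
      case True
      then have "F t1 < 1" using F_mono le by (meson monoD le_less_trans)
      then show ?thesis using True cdt_mono[OF le] by (simp add: h_def notE_iff)
    next
      case False then show ?thesis using cdt_bounds[of t1] by (simp add: h_def notE_iff)
    qed
  qed
  then have [measurable]: "h \<in> borel_measurable borel" by (rule borel_measurable_mono)
  have "cdt \<rho> \<nu> = (\<lambda>t. if F t < 1 then h t else gen_inv \<nu> 1)"
    using cdt_E notE_iff by (auto simp: h_def fun_eq_iff)
  then show ?thesis by simp
qed

lemma cdt_distr: "distr \<rho> borel (cdt \<rho> \<nu>) = \<nu>"
proof (rule cdf_unique)
  show "real_distribution (distr \<rho> borel (cdt \<rho> \<nu>))" by simp
  show "real_distribution \<nu>" by unfold_locales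
  show "Distribution_Functions.cdf (distr \<rho> borel (cdt \<rho> \<nu>)) = Distribution_Functions.cdf \<nu>"
  proof
    fix x
    define c where "c = Distribution_Functions.cdf \<nu> x"
    have c01: "0 \<le> c" "c \<le> 1" using N.cdf_nonneg N.cdf_bounded_prob c_def by auto
    let ?A = "{t. cdt \<rho> \<nu> t \<le> x}"
    have Am[measurable]: "?A \<in> sets borel" by measurable
    have "Distribution_Functions.cdf (distr \<rho> borel (cdt \<rho> \<nu>)) x = measure \<rho> ?A"
    proof -
      have "cdt \<rho> \<nu> -` {..x} \<inter> space \<rho> = ?A" by auto
      then show ?thesis by (simp add: cdf_def2 measure_distr)
    qed
    also have "\<dots> = measure \<rho> (?A - E)" using E_null by (simp add: measure_Diff_null_set)
    finally have eq: "Distribution_Functions.cdf (distr \<rho> borel (cdt \<rho> \<nu>)) x = measure \<rho> (?A - E)" .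
    have s1: "{t. F t < c} - E \<subseteq> ?A - E"
    proof
      fix t assume "t \<in> {t. F t < c} - E"
      then show "t \<in> ?A - E" using galois1[OF nc F_nonneg[of t]] by (simp add: c_def cdt_notE)
    qed
    have s2: "?A - E \<subseteq> {t. F t \<le> c}"
    proof
      fix t assume "t \<in> ?A - E"
      then have "t \<notin> E" "gen_inv \<nu> (F t) \<le> x" using cdt_notE[of t] by auto
      then show "t \<in> {t. F t \<le> c}" using galois2[OF nc F_nonneg[of t]] notE_iff
        by (simp add: c_def)
    qed
    have "c \<le> measure \<rho> {t. F t < c}" by (rule B1[OF c01(2)])
    also have "\<dots> = measure \<rho> ({t. F t < c} - E)" using E_null by (simp add: measure_Diff_null_set)
    also have "\<dots> \<le> measure \<rho> (?A - E)" using s1 by (intro finite_measure_mono) auto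
    finally have l: "c \<le> measure \<rho> (?A - E)" .
    have "measure \<rho> (?A - E) \<le> measure \<rho> {t. F t \<le> c}" using s2 by (intro finite_measure_mono) auto
    also have "\<dots> \<le> c" by (rule B2[OF c01(1)])
    finally show "Distribution_Functions.cdf (distr \<rho> borel (cdt \<rho> \<nu>)) x = Distribution_Functions.cdf \<nu> x"
      using l eq c_def by simp
  qed
qed

end
end


section \<open>Measures on the plane\<close>

lemma msupport_compl_null:
  fixes \<mu> :: "(real^2) measure"
  assumes sb: "sets \<mu> = sets borel"
  shows "UNIV - msupport \<mu> \<in> null_sets \<mu>"
proof -
  define \<F> where "\<F> = {ball x e | x e. e > 0 \<and> emeasure \<mu> (ball x e) = 0}"
  have op: "\<And>S. S \<in> \<F> \<Longrightarrow> open S" by (auto simp: \<F>_def)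
  have U: "\<Union>\<F> = UNIV - msupport \<mu>"
  proof (rule set_eqI, rule iffI)
    fix y assume "y \<in> \<Union>\<F>"
    then obtain x e where xe: "e > 0" "emeasure \<mu> (ball x e) = 0" "y \<in> ball x e"
      by (auto simp: \<F>_def)
    have "ball y (e - dist x y) \<subseteq> ball x e"
      by (auto simp: ball_def) (metis add.commute dist_commute dist_triangle_lt less_diff_eq)
    then have "emeasure \<mu> (ball y (e - dist x y)) \<le> emeasure \<mu> (ball x e)"
      by (intro emeasure_mono) (auto simp: sb)
    then have "emeasure \<mu> (ball y (e - dist x y)) = 0" using xe by simp
    moreover have "e - dist x y > 0" using xe by (simp add: dist_commute)
    ultimately show "y \<in> UNIV - msupport \<mu>" by (auto simp: msupport_def intro!: exI[of _ "e - dist x y"])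
  next
    fix y assume "y \<in> UNIV - msupport \<mu>"
    then obtain e where "e > 0" "\<not> emeasure \<mu> (ball y e) > 0" by (auto simp: msupport_def)
    then show "y \<in> \<Union>\<F>" by (auto simp: \<F>_def intro!: exI[of _ "ball y e"])
  qed
  obtain \<F>' where F': "\<F>' \<subseteq> \<F>" "countable \<F>'" "\<Union>\<F>' = \<Union>\<F>" by (rule Lindelof[OF op]) blast
  have "\<Union>(id ` \<F>') \<in> null_sets \<mu>"
  proof (rule null_sets_UN'[OF F'(2)])
    fix S assume "S \<in> \<F>'"
    then have "S \<in> \<F>" using F' by auto
    then show "id S \<in> null_sets \<mu>" by (auto simp: \<F>_def null_sets_def sb)
  qed
  then have "\<Union>\<F>' \<in> null_sets \<mu>" by simp
  then show ?thesis by (simp only: F'(3) U)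
qed

lemma AE_msupport:
  fixes \<mu> :: "(real^2) measure"
  assumes sb: "sets \<mu> = sets borel"
  shows "AE x in \<mu>. x \<in> msupport \<mu>"
  using AE_not_in[OF msupport_compl_null[OF sb]] by simp

lemma Pc_starD:
  assumes "\<mu> \<in> Pc_star"
  shows "prob_space \<mu>" "sets \<mu> = sets borel" "compact (msupport \<mu>)" "aff_dim (msupport \<mu>) > 1"
  using assms by (auto simp: Pc_star_def)

lemma Pc_star_bound:
  assumes "\<mu> \<in> Pc_star"
  obtains R where "R > 0" "\<And>x. x \<in> msupport \<mu> \<Longrightarrow> norm x \<le> R"
  using compact_imp_bounded[OF Pc_starD(3)[OF assms]] bounded_pos by metis

lemma radon_nice:
  assumes mu: "\<mu> \<in> Pc_star" and R: "\<And>x. x \<in> msupport \<mu> \<Longrightarrow> norm x \<le> R" and th: "norm \<theta> = 1"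
  shows "nice (radon \<theta> \<mu>) (-R-1) R"
proof -
  interpret P: prob_space \<mu> using Pc_starD[OF mu] by simp
  have sb: "sets \<mu> = sets borel" using Pc_starD[OF mu] by simp
  have meas: "(\<lambda>x. x \<bullet> \<theta>) \<in> borel_measurable \<mu>" unfolding measurable_cong_sets[OF sb refl] by simp
  have rd: "real_distribution (radon \<theta> \<mu>)" unfolding radon_def
    by (rule P.real_distribution_distr) (use meas in simp)
  have cd: "Defs.cdf (radon \<theta> \<mu>) s = measure \<mu> {x. x \<bullet> \<theta> \<le> s}" for s
  proof -
    have sp: "space \<mu> = UNIV" using sets_eq_imp_space_eq[OF sb] by simp
    have "(\<lambda>x. x \<bullet> \<theta>) -` {..s} \<inter> space \<mu> = {x. x \<bullet> \<theta> \<le> s}" by (auto simp: sp)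
    then show ?thesis unfolding Defs.cdf_def radon_def using meas by (simp add: measure_distr)
  qed
  have ip: "\<bar>x \<bullet> \<theta>\<bar> \<le> norm x" for x using Cauchy_Schwarz_ineq2[of x \<theta>] th by simp
  have "{x. x \<bullet> \<theta> \<le> -R-1} \<subseteq> UNIV - msupport \<mu>"
  proof
    fix x assume "x \<in> {x. x \<bullet> \<theta> \<le> -R-1}"
    then have "norm x > R" using ip[of x] by (auto simp: abs_le_iff)
    moreover have "x \<notin> msupport \<mu>"
    proof
      assume "x \<in> msupport \<mu>"
      then have "norm x \<le> R" by (rule R)
      then show False using \<open>norm x > R\<close> by simp
    qed
    ultimately show "x \<in> UNIV - msupport \<mu>" by simp
  qed
  have "{x. x \<bullet> \<theta> \<le> -R-1} \<in> null_sets \<mu>"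
  proof (rule null_sets_subset[OF msupport_compl_null[OF sb] _ \<open>_ \<subseteq> UNIV - msupport \<mu>\<close>])
    have "{x. x \<bullet> \<theta> \<le> -R-1} \<in> sets borel" by measurable
    then show "{x. x \<bullet> \<theta> \<le> -R-1} \<in> sets \<mu>" using sb by simp
  qed
  then have c0: "Defs.cdf (radon \<theta> \<mu>) (-R-1) = 0" by (simp add: cd measure_eq_0_null_sets)
  have "AE x in \<mu>. x \<in> {x. x \<bullet> \<theta> \<le> R}"
  proof (rule AE_mp[OF AE_msupport[OF sb]], rule AE_I2, rule impI)
    fix x assume "x \<in> msupport \<mu>"
    then have "norm x \<le> R" by (rule R)
    then show "x \<in> {x. x \<bullet> \<theta> \<le> R}" using ip[of x] by simp
  qed
  then have c1: "Defs.cdf (radon \<theta> \<mu>) R = 1"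
  proof -
    have "{x. x \<bullet> \<theta> \<le> R} \<in> sets borel" by measurable
    then show ?thesis using P.prob_eq_1[of "{x. x \<bullet> \<theta> \<le> R}"] sb \<open>AE x in \<mu>. _\<close> by (simp add: cd)
  qed
  show ?thesis using rd c0 c1 by (simp add: nice_def)
qed


lemma Pc_sp: "\<mu> \<in> Pc_star \<Longrightarrow> space \<mu> = UNIV"
  using sets_eq_imp_space_eq[OF Pc_starD(2)] by simp

lemma Pc_meas: assumes "\<mu> \<in> Pc_star" "f \<in> borel_measurable borel" shows "f \<in> borel_measurable \<mu>"
  by (subst measurable_cong_sets[OF Pc_starD(2)[OF assms(1)] refl]) (rule assms(2))

lemma Pc_int:
  fixes f :: "real^2 \<Rightarrow> real"
  assumes mu: "\<mu> \<in> Pc_star" and R: "\<And>x. x \<in> msupport \<mu> \<Longrightarrow> norm x \<le> R"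
    and fm: "f \<in> borel_measurable borel" and B: "\<And>x. norm x \<le> R \<Longrightarrow> \<bar>f x\<bar> \<le> B"
  shows "integrable \<mu> f"
proof -
  interpret P: prob_space \<mu> using Pc_starD[OF mu] by simp
  have "AE x in \<mu>. norm (f x) \<le> B"
  proof (rule AE_mp[OF AE_msupport[OF Pc_starD(2)[OF mu]]], rule AE_I2, rule impI)
    fix x assume "x \<in> msupport \<mu>"
    then show "norm (f x) \<le> B" using R B by simp
  qed
  then show ?thesis by (rule P.integrable_const_bound) (rule Pc_meas[OF mu fm])
qed

definition Var2 :: "(real^2) measure \<Rightarrow> real^2 \<Rightarrow> real" where
  "Var2 \<mu> \<theta> = (\<integral>x. (x \<bullet> \<theta> - (\<integral>z. z \<bullet> \<theta> \<partial>\<mu>))^2 \<partial>\<mu>)"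

lemma inner2: "(x::real^2) \<bullet> \<theta> = x$1 * \<theta>$1 + x$2 * \<theta>$2"
  by (simp add: inner_vec_def sum_2)

lemma sq_bound: fixes a b :: real assumes "\<bar>a\<bar> \<le> A" "\<bar>b\<bar> \<le> B" shows "\<bar>(a - b)^2\<bar> \<le> (A + B)^2"
proof -
  have "\<bar>a - b\<bar> \<le> A + B" using assms by linarith
  then have "\<bar>a - b\<bar>^2 \<le> (A + B)^2" by (intro power_mono) auto
  then show ?thesis by simp
qed

lemma Var2_pos:
  assumes mu: "\<mu> \<in> Pc_star" and th: "\<theta> \<noteq> 0"
  shows "Var2 \<mu> \<theta> > 0"
proof (rule ccontr)
  assume nv: "\<not> ?thesis"
  interpret P: prob_space \<mu> using Pc_starD[OF mu] by simp
  obtain R where R: "R > 0" "\<And>x. x \<in> msupport \<mu> \<Longrightarrow> norm x \<le> R" using Pc_star_bound[OF mu] by blast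
  have sb: "sets \<mu> = sets borel" using Pc_starD[OF mu] by simp
  define m where "m = (\<integral>z. z \<bullet> \<theta> \<partial>\<mu>)"
  have ip: "\<bar>x \<bullet> \<theta>\<bar> \<le> norm x * norm \<theta>" for x by (rule Cauchy_Schwarz_ineq2)
  have intm: "integrable \<mu> (\<lambda>z. z \<bullet> \<theta>)"
  proof (rule Pc_int[OF mu R(2), of _ "R * norm \<theta>"])
    fix x :: "real^2" assume "norm x \<le> R"
    then show "\<bar>x \<bullet> \<theta>\<bar> \<le> R * norm \<theta>" using ip[of x] mult_right_mono[OF \<open>norm x \<le> R\<close> norm_ge_zero[of \<theta>]] by linarith
  qed measurable
  have int2: "integrable \<mu> (\<lambda>x. (x \<bullet> \<theta> - m)^2)"
  proof (rule Pc_int[OF mu R(2), of _ "(R * norm \<theta> + \<bar>m\<bar>)^2"])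
    fix x :: "real^2" assume "norm x \<le> R"
    then have "\<bar>x \<bullet> \<theta>\<bar> \<le> R * norm \<theta>" using ip[of x] mult_right_mono[OF \<open>norm x \<le> R\<close> norm_ge_zero[of \<theta>]] by linarith
    then show "\<bar>(x \<bullet> \<theta> - m)^2\<bar> \<le> (R * norm \<theta> + \<bar>m\<bar>)^2" by (rule sq_bound) simp
  qed measurable
  have "Var2 \<mu> \<theta> = 0"
    using nv P.variance_positive[of "\<lambda>z. z \<bullet> \<theta>"] by (simp add: Var2_def)
  then have "AE x in \<mu>. (x \<bullet> \<theta> - m)^2 = 0"
    using integral_nonneg_eq_0_iff_AE[OF int2] by (simp add: Var2_def m_def)
  then have AE: "AE x in \<mu>. x \<bullet> \<theta> = m" by simp
  define N where "N = {x. x \<bullet> \<theta> \<noteq> m}"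
  have Nm: "N \<in> sets \<mu>" unfolding N_def sb by measurable
  have N0: "emeasure \<mu> N = 0"
    using AE_iff_measurable[OF Nm, of "\<lambda>x. x \<bullet> \<theta> = m"] AE Pc_sp[OF mu] by (simp add: N_def)
  have sub: "msupport \<mu> \<subseteq> {x. \<theta> \<bullet> x = m}"
  proof
    fix x assume x: "x \<in> msupport \<mu>"
    show "x \<in> {x. \<theta> \<bullet> x = m}"
    proof (rule ccontr)
      assume "x \<notin> {x. \<theta> \<bullet> x = m}"
      then have ne: "x \<bullet> \<theta> \<noteq> m" by (simp add: inner_commute)
      define e where "e = \<bar>x \<bullet> \<theta> - m\<bar> / norm \<theta>"
      have e0: "e > 0" using ne th by (simp add: e_def)
      have "ball x e \<subseteq> N"
      proof
        fix y assume "y \<in> ball x e"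
        then have "dist x y < e" by simp
        then have "norm (y - x) * norm \<theta> < \<bar>x \<bullet> \<theta> - m\<bar>"
          using th by (simp add: e_def dist_norm norm_minus_commute pos_less_divide_eq)
        moreover have "\<bar>(y - x) \<bullet> \<theta>\<bar> \<le> norm (y - x) * norm \<theta>" by (rule ip)
        ultimately have "\<bar>y \<bullet> \<theta> - x \<bullet> \<theta>\<bar> < \<bar>x \<bullet> \<theta> - m\<bar>" by (simp add: inner_diff_left)
        then show "y \<in> N" by (auto simp: N_def)
      qed
      then have "emeasure \<mu> (ball x e) \<le> emeasure \<mu> N" by (intro emeasure_mono Nm)
      then have "emeasure \<mu> (ball x e) = 0" using N0 by simp
      then show False using x e0 by (auto simp: msupport_def)
    qed
  qed
  have "aff_dim (msupport \<mu>) \<le> aff_dim {x. \<theta> \<bullet> x = m}" by (rule aff_dim_subset[OF sub])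
  also have "\<dots> = 1" using aff_dim_hyperplane[OF th, of m] by simp
  finally show False using Pc_starD(4)[OF mu] by simp
qed


lemma Pc_int_cont:
  fixes f :: "real^2 \<Rightarrow> real"
  assumes mu: "\<mu> \<in> Pc_star" and fc: "continuous_on UNIV f"
  shows "integrable \<mu> f"
proof -
  obtain R where R: "R > 0" "\<And>x. x \<in> msupport \<mu> \<Longrightarrow> norm x \<le> R" using Pc_star_bound[OF mu] by blast
  have "compact (f ` cball 0 R)"
    by (rule compact_continuous_image) (use fc continuous_on_subset in auto)
  then obtain B where B: "\<And>y. y \<in> f ` cball 0 R \<Longrightarrow> norm y \<le> B"
    using compact_imp_bounded bounded_iff by metis
  show ?thesis
  proof (rule Pc_int[OF mu R(2), of f B])
    show "f \<in> borel_measurable borel" using fc by (rule borel_measurable_continuous_onI)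
    fix x :: "real^2" assume "norm x \<le> R"
    then show "\<bar>f x\<bar> \<le> B" using B[of "f x"] by simp
  qed
qed

lemma Var2_quad:
  assumes mu: "\<mu> \<in> Pc_star"
  obtains a b c where "\<And>\<theta>. Var2 \<mu> \<theta> = (\<theta>$1)^2 * a + 2 * (\<theta>$1) * (\<theta>$2) * b + (\<theta>$2)^2 * c"
proof -
  define m1 where "m1 = (\<integral>x. x$1 \<partial>\<mu>)"
  define m2 where "m2 = (\<integral>x. x$2 \<partial>\<mu>)"
  define a where "a = (\<integral>x. (x$1 - m1)^2 \<partial>\<mu>)"
  define b where "b = (\<integral>x. (x$1 - m1) * (x$2 - m2) \<partial>\<mu>)"
  define c where "c = (\<integral>x. (x$2 - m2)^2 \<partial>\<mu>)"
  have i1: "integrable \<mu> (\<lambda>x. x$1)" by (rule Pc_int_cont[OF mu]) (intro continuous_intros)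
  have i2: "integrable \<mu> (\<lambda>x. x$2)" by (rule Pc_int_cont[OF mu]) (intro continuous_intros)
  have ia: "integrable \<mu> (\<lambda>x. (x$1 - m1)^2)" by (rule Pc_int_cont[OF mu]) (intro continuous_intros)
  have ib: "integrable \<mu> (\<lambda>x. (x$1 - m1) * (x$2 - m2))" by (rule Pc_int_cont[OF mu]) (intro continuous_intros)
  have ic: "integrable \<mu> (\<lambda>x. (x$2 - m2)^2)" by (rule Pc_int_cont[OF mu]) (intro continuous_intros)
  interpret P: prob_space \<mu> using Pc_starD[OF mu] by simp
  have "Var2 \<mu> \<theta> = (\<theta>$1)^2 * a + 2 * (\<theta>$1) * (\<theta>$2) * b + (\<theta>$2)^2 * c" for \<theta>
  proof -
    have m: "(\<integral>z. z \<bullet> \<theta> \<partial>\<mu>) = m1 * \<theta>$1 + m2 * \<theta>$2"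
      unfolding inner2 m1_def m2_def using i1 i2 by simp
    have pw: "(x \<bullet> \<theta> - (m1 * \<theta>$1 + m2 * \<theta>$2))^2
       = (\<theta>$1)^2 * (x$1 - m1)^2 + (2 * (\<theta>$1) * (\<theta>$2)) * ((x$1 - m1) * (x$2 - m2)) + (\<theta>$2)^2 * (x$2 - m2)^2"
      for x :: "real^2" unfolding inner2 by (simp add: power2_eq_square algebra_simps)
    have "Var2 \<mu> \<theta> = (\<integral>x. (\<theta>$1)^2 * (x$1 - m1)^2 + (2 * (\<theta>$1) * (\<theta>$2)) * ((x$1 - m1) * (x$2 - m2)) + (\<theta>$2)^2 * (x$2 - m2)^2 \<partial>\<mu>)"
      unfolding Var2_def m pw ..
    also have "\<dots> = (\<theta>$1)^2 * a + (2 * (\<theta>$1) * (\<theta>$2)) * b + (\<theta>$2)^2 * c"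
      using ia ib ic by (simp add: a_def b_def c_def)
    finally show ?thesis by simp
  qed
  then show ?thesis using that by blast
qed

lemma Var2_lower:
  assumes mu: "\<mu> \<in> Pc_star"
  obtains \<delta> where "\<delta> > 0" "\<And>\<theta>. norm \<theta> = 1 \<Longrightarrow> \<delta> \<le> Var2 \<mu> \<theta>"
proof -
  obtain a b c where Q: "\<And>\<theta>. Var2 \<mu> \<theta> = (\<theta>$1)^2 * a + 2 * (\<theta>$1) * (\<theta>$2) * b + (\<theta>$2)^2 * c"
    using Var2_quad[OF mu] by blast
  have qpos: "u^2 * a + 2 * u * v * b + v^2 * c > 0" if "u \<noteq> 0 \<or> v \<noteq> 0" for u v :: real
  proof -
    have "(vector [u, v] :: real^2) \<noteq> 0" using that by (metis vector_2 zero_index)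
    from Var2_pos[OF mu this] show ?thesis by (simp add: Q vector_2)
  qed
  have a0: "a > 0" using qpos[of 1 0] by simp
  have c0: "c > 0" using qpos[of 0 1] by simp
  have "b^2 * a + 2 * b * (-a) * b + (-a)^2 * c > 0" using qpos[of b "-a"] a0 by simp
  then have "a * (a * c - b^2) > 0" by (simp add: power2_eq_square algebra_simps)
  then have d0: "a * c - b^2 > 0" using a0 by (simp add: zero_less_mult_iff)
  show ?thesis
  proof (rule that[of "(a * c - b^2) / (a + c)"])
    show "(a * c - b^2) / (a + c) > 0" using d0 a0 c0 by simp
    fix \<theta> :: "real^2" assume "norm \<theta> = 1"
    then have n1: "(\<theta>$1)^2 + (\<theta>$2)^2 = 1" by (simp add: norm_eq_1 inner2 power2_eq_square)
    define u where "u = \<theta>$1"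
    define v where "v = \<theta>$2"
    have idq: "(u^2 * a + 2 * u * v * b + v^2 * c) * (a + c)
        = (a * c - b^2) * (u^2 + v^2) + (a * u + b * v)^2 + (b * u + c * v)^2"
      by (simp add: power2_eq_square algebra_simps)
    have n1': "u^2 + v^2 = 1" using n1 by (simp add: u_def v_def)
    have "(a * c - b^2) \<le> (u^2 * a + 2 * u * v * b + v^2 * c) * (a + c)"
      unfolding idq n1' mult_1_right using zero_le_power2[of "a * u + b * v"] zero_le_power2[of "b * u + c * v"] by linarith
    then show "(a * c - b^2) / (a + c) \<le> Var2 \<mu> \<theta>"
      using a0 c0 by (simp add: Q u_def v_def pos_divide_le_eq)
  qed
qed


lemma div_bound: fixes x s A :: real shows "\<bar>x\<bar> \<le> A \<Longrightarrow> 0 < s \<Longrightarrow> \<bar>x / s\<bar> \<le> A / s"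
  by (simp add: abs_div divide_right_mono)

lemma radon_moments:
  assumes mu: "\<mu> \<in> Pc_star"
  shows "(\<integral>y. y \<partial>radon \<theta> \<mu>) = (\<integral>x. x \<bullet> \<theta> \<partial>\<mu>)"
    and "(\<integral>y. (y - m)^2 \<partial>radon \<theta> \<mu>) = (\<integral>x. (x \<bullet> \<theta> - m)^2 \<partial>\<mu>)"
proof -
  have me: "(\<lambda>x. x \<bullet> \<theta>) \<in> measurable \<mu> borel" by (rule Pc_meas[OF mu]) measurable
  show "(\<integral>y. y \<partial>radon \<theta> \<mu>) = (\<integral>x. x \<bullet> \<theta> \<partial>\<mu>)"
    unfolding radon_def by (rule integral_distr[OF me]) simp
  show "(\<integral>y. (y - m)^2 \<partial>radon \<theta> \<mu>) = (\<integral>x. (x \<bullet> \<theta> - m)^2 \<partial>\<mu>)"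
    unfolding radon_def by (rule integral_distr[OF me]) simp
qed

context refm begin

context fixes \<nu> s0 s1 assumes nc: "nice \<nu> s0 s1"
begin

lemma cdt_meas_rho[measurable]: "cdt \<rho> \<nu> \<in> borel_measurable \<rho>"
  using cdt_meas[OF nc] by simp

lemma cdt_AE_bounds: "AE t in \<rho>. s0 \<le> cdt \<rho> \<nu> t \<and> cdt \<rho> \<nu> t \<le> s1"
  using AE_notE by eventually_elim (rule cdt_bounds[OF nc])

lemma cdt_integrable: "integrable \<rho> (cdt \<rho> \<nu>)"
proof (rule integrable_const_bound[of _ "max \<bar>s0\<bar> \<bar>s1\<bar>"])
  show "AE t in \<rho>. norm (cdt \<rho> \<nu> t) \<le> max \<bar>s0\<bar> \<bar>s1\<bar>"
    using cdt_AE_bounds by eventually_elim auto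
qed (rule cdt_meas_rho)

lemma cdt_moments:
  shows "rmean \<rho> (cdt \<rho> \<nu>) = (\<integral>y. y \<partial>\<nu>)"
    and "rstd \<rho> (cdt \<rho> \<nu>) = sqrt (\<integral>y. (y - (\<integral>y. y \<partial>\<nu>))^2 \<partial>\<nu>)"
proof -
  have me: "cdt \<rho> \<nu> \<in> measurable \<rho> borel" by (rule cdt_meas_rho)
  have d: "distr \<rho> borel (cdt \<rho> \<nu>) = \<nu>" by (rule cdt_distr[OF nc])
  show m: "rmean \<rho> (cdt \<rho> \<nu>) = (\<integral>y. y \<partial>\<nu>)"
    unfolding rmean_def using integral_distr[OF me, of "\<lambda>y. y"] d by simp
  show "rstd \<rho> (cdt \<rho> \<nu>) = sqrt (\<integral>y. (y - (\<integral>y. y \<partial>\<nu>))^2 \<partial>\<nu>)"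
    unfolding rstd_def m power2_abs using integral_distr[OF me, of "\<lambda>y. (y - (\<integral>y. y \<partial>\<nu>))^2"] d by simp
qed

lemma rmean_bounds: "s0 \<le> rmean \<rho> (cdt \<rho> \<nu>) \<and> rmean \<rho> (cdt \<rho> \<nu>) \<le> s1"
proof
  show "s0 \<le> rmean \<rho> (cdt \<rho> \<nu>)" unfolding rmean_def
    by (rule integral_ge_const[OF cdt_integrable]) (use cdt_AE_bounds in auto)
  show "rmean \<rho> (cdt \<rho> \<nu>) \<le> s1" unfolding rmean_def
    by (rule integral_le_const[OF cdt_integrable]) (use cdt_AE_bounds in auto)
qed

end

lemma rstd_radon:
  assumes mu: "\<mu> \<in> Pc_star" and nc: "nice (radon \<theta> \<mu>) s0 s1"
  shows "rstd \<rho> (cdt \<rho> (radon \<theta> \<mu>)) = sqrt (Var2 \<mu> \<theta>)"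
  using cdt_moments(2)[OF nc] radon_moments[OF mu] by (simp add: Var2_def)

lemma NR_props:
  assumes mu: "\<mu> \<in> Pc_star"
  obtains B where
    "\<And>\<theta> t. norm (\<theta>::real^2) = 1 \<Longrightarrow> t \<notin> E \<Longrightarrow> \<bar>NR \<rho> \<theta> \<mu> t\<bar> \<le> B"
    "\<And>\<theta> t1 t2. norm (\<theta>::real^2) = 1 \<Longrightarrow> t1 \<le> t2 \<Longrightarrow> t2 \<notin> E \<Longrightarrow> NR \<rho> \<theta> \<mu> t1 \<le> NR \<rho> \<theta> \<mu> t2"
    "\<And>(\<theta>::real^2) t1 t2. t1 \<in> E \<Longrightarrow> t2 \<in> E \<Longrightarrow> NR \<rho> \<theta> \<mu> t1 = NR \<rho> \<theta> \<mu> t2"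
proof -
  obtain R where R: "R > 0" "\<And>x. x \<in> msupport \<mu> \<Longrightarrow> norm x \<le> R" using Pc_star_bound[OF mu] by blast
  obtain \<delta> where d: "\<delta> > 0" "\<And>\<theta>. norm \<theta> = 1 \<Longrightarrow> \<delta> \<le> Var2 \<mu> \<theta>" using Var2_lower[OF mu] by blast
  show ?thesis
  proof (rule that[of "(2 * R + 1) / sqrt \<delta>"])
    fix \<theta> :: "real^2" and t assume th: "norm \<theta> = 1" and t: "t \<notin> E"
    have nc: "nice (radon \<theta> \<mu>) (-R-1) R" by (rule radon_nice[OF mu R(2) th])
    have s: "sqrt \<delta> \<le> rstd \<rho> (cdt \<rho> (radon \<theta> \<mu>))" using rstd_radon[OF mu nc] d(2)[OF th] by simp
    have sp: "sqrt \<delta> > 0" using d by simp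
    have "\<bar>cdt \<rho> (radon \<theta> \<mu>) t - rmean \<rho> (cdt \<rho> (radon \<theta> \<mu>))\<bar> \<le> 2 * R + 1"
      using cdt_bounds[OF nc t] rmean_bounds[OF nc] by (simp add: abs_le_iff)
    then have "\<bar>NR \<rho> \<theta> \<mu> t\<bar> \<le> (2 * R + 1) / rstd \<rho> (cdt \<rho> (radon \<theta> \<mu>))"
      unfolding NR_def by (rule div_bound) (use s sp in linarith)
    also have "\<dots> \<le> (2 * R + 1) / sqrt \<delta>"
    proof (rule divide_left_mono)
      show "0 < rstd \<rho> (cdt \<rho> (radon \<theta> \<mu>)) * sqrt \<delta>" using s sp by (intro mult_pos_pos) linarith+
    qed (use s R(1) in auto)
    finally show "\<bar>NR \<rho> \<theta> \<mu> t\<bar> \<le> (2 * R + 1) / sqrt \<delta>" .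
  next
    fix \<theta> :: "real^2" and t1 t2 assume th: "norm \<theta> = 1" and le: "t1 \<le> t2" and t2: "t2 \<notin> E"
    have nc: "nice (radon \<theta> \<mu>) (-R-1) R" by (rule radon_nice[OF mu R(2) th])
    have s: "sqrt \<delta> \<le> rstd \<rho> (cdt \<rho> (radon \<theta> \<mu>))" using rstd_radon[OF mu nc] d(2)[OF th] by simp
    have sp: "rstd \<rho> (cdt \<rho> (radon \<theta> \<mu>)) > 0" using d s by (meson less_le_trans real_sqrt_gt_zero)
    show "NR \<rho> \<theta> \<mu> t1 \<le> NR \<rho> \<theta> \<mu> t2"
      unfolding NR_def using cdt_mono[OF nc le t2] sp by (intro divide_right_mono) auto
  next
    fix \<theta> :: "real^2" and t1 t2 assume "t1 \<in> E" "t2 \<in> E"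
    then show "NR \<rho> \<theta> \<mu> t1 = NR \<rho> \<theta> \<mu> t2"
      unfolding NR_def cdt_def Defs_cdf_rho using Fle1[of t1] Fle1[of t2] by (simp add: E_def)
  qed
qed

end


lemma sphere_ne: "(axis 1 1 :: real^2) \<in> sphere 0 1"
  by simp

context refm begin

lemma E_up: "t1 \<le> t2 \<Longrightarrow> t2 \<notin> E \<Longrightarrow> t1 \<notin> E"
  using F_mono by (auto simp: E_def monoD dest: monoD[of F t1 t2])

lemma NRmax_Linf:
  assumes mu: "\<mu> \<in> Pc_star"
  shows "NRmax \<rho> \<mu> \<in> borel_measurable borel" and "AE t in \<rho>. \<bar>NRmax \<rho> \<mu> t\<bar> \<le> (SOME B. \<forall>t. t \<notin> E \<longrightarrow> \<bar>NRmax \<rho> \<mu> t\<bar> \<le> B)"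
proof -
  obtain B where B1: "\<And>\<theta> t. norm (\<theta>::real^2) = 1 \<Longrightarrow> t \<notin> E \<Longrightarrow> \<bar>NR \<rho> \<theta> \<mu> t\<bar> \<le> B"
    and B2: "\<And>\<theta> t1 t2. norm (\<theta>::real^2) = 1 \<Longrightarrow> t1 \<le> t2 \<Longrightarrow> t2 \<notin> E \<Longrightarrow> NR \<rho> \<theta> \<mu> t1 \<le> NR \<rho> \<theta> \<mu> t2"
    and B3: "\<And>(\<theta>::real^2) t1 t2. t1 \<in> E \<Longrightarrow> t2 \<in> E \<Longrightarrow> NR \<rho> \<theta> \<mu> t1 = NR \<rho> \<theta> \<mu> t2"
    using NR_props[OF mu] by blast
  let ?S = "sphere (0::real^2) 1"
  have Sne: "?S \<noteq> {}" using sphere_ne by blast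
  have bdd: "bdd_above ((\<lambda>\<theta>. NR \<rho> \<theta> \<mu> t) ` ?S)" if "t \<notin> E" for t
    using B1[OF _ that] by (auto simp: bdd_above_def abs_le_iff intro!: exI[of _ B])
  have up: "NR \<rho> \<theta> \<mu> t \<le> NRmax \<rho> \<mu> t" if "t \<notin> E" "\<theta> \<in> ?S" for t \<theta>
    unfolding NRmax_def by (rule cSUP_upper[OF that(2) bdd[OF that(1)]])
  have ub: "NRmax \<rho> \<mu> t \<le> B" if "t \<notin> E" for t
    unfolding NRmax_def by (rule cSUP_least[OF Sne]) (use B1[OF _ that] in \<open>auto simp: abs_le_iff\<close>)
  have lb: "- B \<le> NRmax \<rho> \<mu> t" if "t \<notin> E" for t
  proof -
    have "- B \<le> NR \<rho> (axis 1 1) \<mu> t" using B1[OF _ that, of "axis 1 1"] by (simp add: abs_le_iff)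
    also have "\<dots> \<le> NRmax \<rho> \<mu> t" by (rule up[OF that sphere_ne])
    finally show ?thesis .
  qed
  have bnd: "\<forall>t. t \<notin> E \<longrightarrow> \<bar>NRmax \<rho> \<mu> t\<bar> \<le> B"
  proof (intro allI impI)
    fix t assume "t \<notin> E"
    then show "\<bar>NRmax \<rho> \<mu> t\<bar> \<le> B" using ub[of t] lb[of t] by (simp add: abs_le_iff)
  qed
  have mono: "NRmax \<rho> \<mu> t1 \<le> NRmax \<rho> \<mu> t2" if "t1 \<le> t2" "t2 \<notin> E" for t1 t2
    unfolding NRmax_def
  proof (rule cSUP_least[OF Sne])
    fix \<theta> assume th: "\<theta> \<in> ?S"
    have "NR \<rho> \<theta> \<mu> t1 \<le> NR \<rho> \<theta> \<mu> t2" using B2[OF _ that] th by simp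
    also have "\<dots> \<le> NRmax \<rho> \<mu> t2" by (rule up[OF that(2) th])
    finally show "NR \<rho> \<theta> \<mu> t1 \<le> (SUP \<theta>\<in>?S. NR \<rho> \<theta> \<mu> t2)" by (simp add: NRmax_def)
  qed
  have constE: "NRmax \<rho> \<mu> t1 = NRmax \<rho> \<mu> t2" if "t1 \<in> E" "t2 \<in> E" for t1 t2
    unfolding NRmax_def using B3[OF that] by simp
  define h where "h t = (if t \<in> E then B else NRmax \<rho> \<mu> t)" for t
  have "mono h"
  proof (rule monoI)
    fix t1 t2 :: real assume le: "t1 \<le> t2"
    show "h t1 \<le> h t2"
    proof (cases "t2 \<in> E")
      case True then show ?thesis using ub by (simp add: h_def)
    next
      case False
      then have "t1 \<notin> E" using E_up le by blast
      then show ?thesis using False mono[OF le False] by (simp add: h_def)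
    qed
  qed
  then have [measurable]: "h \<in> borel_measurable borel" by (rule borel_measurable_mono)
  define K where "K = NRmax \<rho> \<mu> (SOME t. t \<in> E)"
  have "NRmax \<rho> \<mu> = (\<lambda>t. if t \<in> E then K else h t)"
  proof
    fix t show "NRmax \<rho> \<mu> t = (if t \<in> E then K else h t)"
    proof (cases "t \<in> E")
      case True
      then have "(SOME t. t \<in> E) \<in> E" by (rule someI)
      from constE[OF True this] True show ?thesis by (simp add: K_def)
    qed (simp add: h_def)
  qed
  then show "NRmax \<rho> \<mu> \<in> borel_measurable borel" by simp
  have sB: "\<forall>t. t \<notin> E \<longrightarrow> \<bar>NRmax \<rho> \<mu> t\<bar> \<le> (SOME B. \<forall>t. t \<notin> E \<longrightarrow> \<bar>NRmax \<rho> \<mu> t\<bar> \<le> B)"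
    using someI[of "\<lambda>B. \<forall>t. t \<notin> E \<longrightarrow> \<bar>NRmax \<rho> \<mu> t\<bar> \<le> B", OF bnd] .
  show "AE t in \<rho>. \<bar>NRmax \<rho> \<mu> t\<bar> \<le> (SOME B. \<forall>t. t \<notin> E \<longrightarrow> \<bar>NRmax \<rho> \<mu> t\<bar> \<le> B)"
    using AE_notE by eventually_elim (use sB in blast)
qed

lemma NRmax_in_Linf: "\<mu> \<in> Pc_star \<Longrightarrow> NRmax \<rho> \<mu> \<in> Linf \<rho>"
  unfolding Linf_def using NRmax_Linf[of \<mu>] by auto

end


section \<open>Affine maps\<close>

lemma mv_inner_transpose: "((A::real^2^2) *v x) \<bullet> \<theta> = x \<bullet> (transpose A *v \<theta>)"
  by (simp add: inner_vec_def sum_2 matrix_vector_mult_def transpose_def algebra_simps)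

lemma msupport_open:
  fixes \<mu> :: "(real^2) measure"
  assumes sb: "sets \<mu> = sets borel"
  shows "x \<in> msupport \<mu> \<longleftrightarrow> (\<forall>U. open U \<longrightarrow> x \<in> U \<longrightarrow> emeasure \<mu> U > 0)"
proof
  assume x: "x \<in> msupport \<mu>"
  show "\<forall>U. open U \<longrightarrow> x \<in> U \<longrightarrow> emeasure \<mu> U > 0"
  proof (intro allI impI)
    fix U :: "(real^2) set" assume "open U" "x \<in> U"
    then obtain e where e: "e > 0" "ball x e \<subseteq> U" by (meson open_contains_ball)
    have "emeasure \<mu> (ball x e) > 0" using x e(1) by (simp add: msupport_def)
    also have "emeasure \<mu> (ball x e) \<le> emeasure \<mu> U"
      using e(2) \<open>open U\<close> by (intro emeasure_mono) (auto simp: sb)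
    finally show "emeasure \<mu> U > 0" .
  qed
next
  assume "\<forall>U. open U \<longrightarrow> x \<in> U \<longrightarrow> emeasure \<mu> U > 0"
  then show "x \<in> msupport \<mu>" by (simp add: msupport_def)
qed

definition Tm :: "real^2^2 \<Rightarrow> real^2 \<Rightarrow> real^2 \<Rightarrow> real^2" where "Tm A y x = A *v x + y"
definition Sm :: "real^2^2 \<Rightarrow> real^2 \<Rightarrow> real^2 \<Rightarrow> real^2" where "Sm Ai y x = Ai *v (x - y)"

lemma Tm_meas'[measurable]: "Tm A y \<in> borel_measurable borel"
  by (rule borel_measurable_continuous_onI)
     (unfold Tm_def, intro continuous_intros matrix_vector_mult_linear_continuous_on)

context
  fixes A Ai :: "real^2^2" and y :: "real^2"
  assumes inv: "A ** Ai = mat 1" "Ai ** A = mat 1"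
begin


lemma TS: "(Tm A y) ((Sm Ai y) x) = x" "(Sm Ai y) ((Tm A y) x) = x"
  by (simp_all add: Tm_def Sm_def matrix_vector_mul_assoc inv)

lemma Tm_cont: "continuous_on UNIV (Tm A y)"
  unfolding Tm_def by (intro continuous_intros matrix_vector_mult_linear_continuous_on)

lemma Sm_cont: "continuous_on UNIV (Sm Ai y)"
  unfolding Sm_def by (intro continuous_on_compose2[OF matrix_vector_mult_linear_continuous_on] continuous_intros) auto

lemma Tm_meas[measurable]: "(Tm A y) \<in> borel_measurable borel"
  by (rule borel_measurable_continuous_onI[OF Tm_cont])

lemma msupport_distr:
  assumes sb: "sets \<mu> = sets borel"
  shows "msupport (distr \<mu> borel (Tm A y)) = (Tm A y) ` msupport \<mu>"
proof -
  have sbd: "sets (distr \<mu> borel (Tm A y)) = sets borel" by simp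
  have sp: "space \<mu> = UNIV" using sets_eq_imp_space_eq[OF sb] by simp
  have Tmu: "(Tm A y) \<in> measurable \<mu> borel" by (subst measurable_cong_sets[OF sb refl]) (rule Tm_meas)
  have em: "emeasure (distr \<mu> borel (Tm A y)) U = emeasure \<mu> ((Tm A y) -` U)" if "open U" for U
    using emeasure_distr[OF Tmu, of U] that sp by simp
  have iff: "x' \<in> msupport (distr \<mu> borel (Tm A y)) \<longleftrightarrow> (Sm Ai y) x' \<in> msupport \<mu>" for x'
  proof -
    have "x' \<in> msupport (distr \<mu> borel (Tm A y)) \<longleftrightarrow> (\<forall>U. open U \<longrightarrow> x' \<in> U \<longrightarrow> emeasure \<mu> ((Tm A y) -` U) > 0)"
      unfolding msupport_open[OF sbd] using em by auto
    also have "\<dots> \<longleftrightarrow> (\<forall>V. open V \<longrightarrow> (Sm Ai y) x' \<in> V \<longrightarrow> emeasure \<mu> V > 0)"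
    proof
      assume H: "\<forall>U. open U \<longrightarrow> x' \<in> U \<longrightarrow> emeasure \<mu> ((Tm A y) -` U) > 0"
      show "\<forall>V. open V \<longrightarrow> (Sm Ai y) x' \<in> V \<longrightarrow> emeasure \<mu> V > 0"
      proof (intro allI impI)
        fix V :: "(real^2) set" assume V: "open V" "(Sm Ai y) x' \<in> V"
        have "open ((Sm Ai y) -` V)" by (rule open_vimage[OF V(1) Sm_cont])
        moreover have "x' \<in> (Sm Ai y) -` V" using V by simp
        moreover have "(Tm A y) -` ((Sm Ai y) -` V) = V" using TS by auto
        ultimately show "emeasure \<mu> V > 0" using H by metis
      qed
    next
      assume H: "\<forall>V. open V \<longrightarrow> (Sm Ai y) x' \<in> V \<longrightarrow> emeasure \<mu> V > 0"
      show "\<forall>U. open U \<longrightarrow> x' \<in> U \<longrightarrow> emeasure \<mu> ((Tm A y) -` U) > 0"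
      proof (intro allI impI)
        fix U :: "(real^2) set" assume U: "open U" "x' \<in> U"
        have "open ((Tm A y) -` U)" by (rule open_vimage[OF U(1) Tm_cont])
        moreover have "(Sm Ai y) x' \<in> (Tm A y) -` U" using U TS by simp
        ultimately show "emeasure \<mu> ((Tm A y) -` U) > 0" using H by metis
      qed
    qed
    also have "\<dots> \<longleftrightarrow> (Sm Ai y) x' \<in> msupport \<mu>" unfolding msupport_open[OF sb] ..
    finally show ?thesis .
  qed
  show ?thesis
  proof (rule set_eqI, rule iffI)
    fix x' assume "x' \<in> msupport (distr \<mu> borel (Tm A y))"
    then have "(Sm Ai y) x' \<in> msupport \<mu>" using iff by simp
    then show "x' \<in> (Tm A y) ` msupport \<mu>" using TS(1)[of x'] by (metis image_eqI)
  next
    fix x' assume "x' \<in> (Tm A y) ` msupport \<mu>"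
    then obtain x where "x \<in> msupport \<mu>" "x' = (Tm A y) x" by blast
    then show "x' \<in> msupport (distr \<mu> borel (Tm A y))" using iff TS(2) by simp
  qed
qed

lemma aff_dim_Tm: "aff_dim ((Tm A y) ` K) = aff_dim K"
proof -
  have "(Tm A y) ` K = (+) y ` ((*v) A ` K)" by (auto simp: Tm_def image_image add.commute)
  moreover have "inj ((*v) A)" by (metis TS(2) Tm_def add_right_imp_eq injI)
  ultimately show ?thesis
    using aff_dim_translation_eq aff_dim_injective_linear_image[OF matrix_vector_mul_linear] by metis
qed

lemma distr_Pc_star:
  assumes mu: "\<mu> \<in> Pc_star"
  shows "distr \<mu> borel (Tm A y) \<in> Pc_star"
proof -
  interpret P: prob_space \<mu> using Pc_starD[OF mu] by simp
  have sb: "sets \<mu> = sets borel" using Pc_starD[OF mu] by simp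
  have Tmu: "(Tm A y) \<in> measurable \<mu> borel" by (subst measurable_cong_sets[OF sb refl]) (rule Tm_meas)
  have "prob_space (distr \<mu> borel (Tm A y))" by (rule P.prob_space_distr[OF Tmu])
  moreover have "compact (msupport (distr \<mu> borel (Tm A y)))"
    unfolding msupport_distr[OF sb]
    by (rule compact_continuous_image[OF continuous_on_subset[OF Tm_cont] Pc_starD(3)[OF mu]]) simp
  moreover have "aff_dim (msupport (distr \<mu> borel (Tm A y))) > 1"
    unfolding msupport_distr[OF sb] aff_dim_Tm using Pc_starD(4)[OF mu] .
  ultimately show ?thesis by (simp add: Pc_star_def)
qed

end

lemma orbit_Pc_star:
  assumes mu: "\<mu> \<in> Pc_star"
  shows "affine_orbit \<mu> \<subseteq> Pc_star"
proof
  fix \<mu>' assume "\<mu>' \<in> affine_orbit \<mu>"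
  then obtain A y where Ay: "\<mu>' = distr \<mu> borel (\<lambda>x. A *v x + y)" "invertible (A::real^2^2)"
    by (auto simp: affine_orbit_def)
  then obtain Ai where inv: "A ** Ai = mat 1" "Ai ** A = mat 1" by (auto simp: invertible_def)
  have "(\<lambda>x. A *v x + y) = Tm A y" by (simp add: Tm_def fun_eq_iff)
  then show "\<mu>' \<in> Pc_star" using distr_Pc_star[OF inv mu] Ay(1) by simp
qed


lemma tinv:
  assumes inv: "A ** Ai = mat 1" "Ai ** A = mat 1"
  shows "transpose Ai *v (transpose A *v \<theta>) = (\<theta>::real^2)"
    and "transpose A *v (transpose Ai *v \<theta>) = (\<theta>::real^2)"
proof -
  show "transpose Ai *v (transpose A *v \<theta>) = \<theta>"
    by (simp only: matrix_vector_mul_assoc matrix_transpose_mul[symmetric] inv transpose_mat matrix_vector_mul_lid)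
  show "transpose A *v (transpose Ai *v \<theta>) = \<theta>"
    by (simp only: matrix_vector_mul_assoc matrix_transpose_mul[symmetric] inv transpose_mat matrix_vector_mul_lid)
qed

definition phi :: "real^2^2 \<Rightarrow> real^2 \<Rightarrow> real^2" where
  "phi A \<theta> = (1 / norm (transpose A *v \<theta>)) *\<^sub>R (transpose A *v \<theta>)"

lemma phi_sphere:
  assumes inv: "A ** Ai = mat 1" "Ai ** A = mat 1"
  shows "phi A ` sphere 0 1 = sphere 0 1"
proof (rule set_eqI, rule iffI)
  fix \<psi> assume "\<psi> \<in> phi A ` sphere 0 1"
  then obtain \<theta> where th: "norm \<theta> = 1" "\<psi> = phi A \<theta>" by auto
  have "transpose A *v \<theta> \<noteq> 0" using tinv(1)[OF inv, of \<theta>] th(1) by (metis matrix_vector_mult_0_right norm_zero zero_neq_one)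
  then show "\<psi> \<in> sphere 0 1" using th(2) by (simp add: phi_def)
next
  fix \<psi> :: "real^2" assume "\<psi> \<in> sphere 0 1"
  then have p1: "norm \<psi> = 1" by simp
  define \<theta>0 where "\<theta>0 = transpose Ai *v \<psi>"
  have t0: "transpose A *v \<theta>0 = \<psi>" unfolding \<theta>0_def by (rule tinv(2)[OF inv])
  have nz: "\<theta>0 \<noteq> 0"
  proof
    assume "\<theta>0 = 0"
    then have "\<psi> = 0" using t0 by (metis matrix_vector_mult_0_right)
    then show False using p1 by simp
  qed
  define \<theta> where "\<theta> = (1 / norm \<theta>0) *\<^sub>R \<theta>0"
  have "norm \<theta> = 1" using nz by (simp add: \<theta>_def)
  moreover have tt: "transpose A *v \<theta> = (1 / norm \<theta>0) *\<^sub>R \<psi>"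
    unfolding \<theta>_def matrix_vector_mult_scaleR t0 ..
  have "phi A \<theta> = \<psi>" unfolding phi_def tt using nz p1 by simp
  ultimately show "\<psi> \<in> phi A ` sphere 0 1" by (metis image_eqI mem_sphere_0)
qed

lemma radon_affine:
  assumes mu: "\<mu> \<in> Pc_star" and w: "transpose A *v \<theta> \<noteq> 0"
  shows "radon \<theta> (distr \<mu> borel (Tm A y)) =
    distr (radon (phi A \<theta>) \<mu>) borel (\<lambda>s. norm (transpose A *v \<theta>) * s + y \<bullet> \<theta>)"
proof -
  have sb: "sets \<mu> = sets borel" using Pc_starD[OF mu] by simp
  have Tmu: "Tm A y \<in> measurable \<mu> borel" by (subst measurable_cong_sets[OF sb refl]) (rule Tm_meas')
  have pm: "(\<lambda>x. x \<bullet> phi A \<theta>) \<in> measurable \<mu> borel" by (rule Pc_meas[OF mu]) measurable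
  have "radon \<theta> (distr \<mu> borel (Tm A y)) = distr \<mu> borel ((\<lambda>x. x \<bullet> \<theta>) \<circ> Tm A y)"
    unfolding radon_def by (rule distr_distr[OF _ Tmu]) measurable
  also have "(\<lambda>x. x \<bullet> \<theta>) \<circ> Tm A y = (\<lambda>s. norm (transpose A *v \<theta>) * s + y \<bullet> \<theta>) \<circ> (\<lambda>x. x \<bullet> phi A \<theta>)"
    using w by (simp add: fun_eq_iff Tm_def phi_def inner_add_left mv_inner_transpose)
  also have "distr \<mu> borel \<dots> = distr (radon (phi A \<theta>) \<mu>) borel (\<lambda>s. norm (transpose A *v \<theta>) * s + y \<bullet> \<theta>)"
    unfolding radon_def by (rule distr_distr[symmetric, OF _ pm]) measurable
  finally show ?thesis .
qed

context refm begin

lemma NR_affine: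
  assumes mu: "\<mu> \<in> Pc_star" and inv: "A ** Ai = mat 1" "Ai ** A = mat 1"
    and th: "norm \<theta> = 1" and t: "t \<notin> E"
  shows "NR \<rho> \<theta> (distr \<mu> borel (Tm A y)) t = NR \<rho> (phi A \<theta>) \<mu> t"
proof -
  define w where "w = transpose A *v \<theta>"
  have wnz: "w \<noteq> 0" using tinv(1)[OF inv, of \<theta>] th unfolding w_def by (metis matrix_vector_mult_0_right norm_zero zero_neq_one)
  define a where "a = norm w"
  have a0: "a > 0" using wnz by (simp add: a_def)
  define b where "b = y \<bullet> \<theta>"
  let ?\<mu>' = "distr \<mu> borel (Tm A y)"
  have mu': "?\<mu>' \<in> Pc_star" by (rule distr_Pc_star[OF inv mu])
  obtain R where R: "R > 0" "\<And>x. x \<in> msupport \<mu> \<Longrightarrow> norm x \<le> R" using Pc_star_bound[OF mu] by blast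
  obtain R' where R': "R' > 0" "\<And>x. x \<in> msupport ?\<mu>' \<Longrightarrow> norm x \<le> R'" using Pc_star_bound[OF mu'] by blast
  have p1: "norm (phi A \<theta>) = 1" using wnz by (simp add: phi_def w_def)
  have nc: "nice (radon (phi A \<theta>) \<mu>) (-R-1) R" by (rule radon_nice[OF mu R(2) p1])
  have nc': "nice (radon \<theta> ?\<mu>') (-R'-1) R'" by (rule radon_nice[OF mu' R'(2) th])
  have eq: "radon \<theta> ?\<mu>' = distr (radon (phi A \<theta>) \<mu>) borel (\<lambda>s. a * s + b)"
    using radon_affine[OF mu wnz[unfolded w_def]] by (simp add: a_def w_def b_def)
  define g where "g = cdt \<rho> (radon (phi A \<theta>) \<mu>)"
  define g' where "g' = cdt \<rho> (radon \<theta> ?\<mu>')"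
  have pt: "g' s = a * g s + b" if "s \<notin> E" for s
  proof -
    have u: "0 \<le> F s" "F s < 1" using cdf_nonneg[of s] that notE_iff by auto
    show ?thesis
      unfolding g_def g'_def cdt_notE[OF nc that] cdt_notE[OF nc' that]
      unfolding eq by (rule gen_inv_scale[OF nc u a0])
  qed
  have gm[measurable]: "g \<in> borel_measurable \<rho>" unfolding g_def by (rule cdt_meas_rho[OF nc])
  have gm'[measurable]: "g' \<in> borel_measurable \<rho>" unfolding g'_def by (rule cdt_meas_rho[OF nc'])
  have gi: "integrable \<rho> g" unfolding g_def by (rule cdt_integrable[OF nc])
  have AEg: "AE s in \<rho>. g' s = a * g s + b" using AE_notE by eventually_elim (rule pt)
  have m': "rmean \<rho> g' = a * rmean \<rho> g + b"
  proof -
    have "rmean \<rho> g' = (\<integral>s. a * g s + b \<partial>\<rho>)" unfolding rmean_def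
      by (rule integral_cong_AE) (use AEg in auto)
    also have "\<dots> = a * rmean \<rho> g + b" using gi prob_space by (simp add: rmean_def)
    finally show ?thesis .
  qed
  have s': "rstd \<rho> g' = a * rstd \<rho> g"
  proof -
    have "(\<integral>s. \<bar>g' s - rmean \<rho> g'\<bar>^2 \<partial>\<rho>) = (\<integral>s. a^2 * \<bar>g s - rmean \<rho> g\<bar>^2 \<partial>\<rho>)"
    proof (rule integral_cong_AE)
      show "AE s in \<rho>. \<bar>g' s - rmean \<rho> g'\<bar>^2 = a^2 * \<bar>g s - rmean \<rho> g\<bar>^2"
        using AEg by eventually_elim (simp add: m' power2_eq_square algebra_simps)
    qed auto
    also have "\<dots> = a^2 * (\<integral>s. \<bar>g s - rmean \<rho> g\<bar>^2 \<partial>\<rho>)" by simp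
    finally show ?thesis using a0 by (simp add: rstd_def real_sqrt_mult)
  qed
  have "NR \<rho> \<theta> ?\<mu>' t = (g' t - rmean \<rho> g') / rstd \<rho> g'" by (simp add: NR_def g'_def)
  also have "\<dots> = (a * (g t - rmean \<rho> g)) / (a * rstd \<rho> g)" using pt[OF t] m' s' by (simp add: algebra_simps)
  also have "\<dots> = (g t - rmean \<rho> g) / rstd \<rho> g" using a0 by simp
  also have "\<dots> = NR \<rho> (phi A \<theta>) \<mu> t" by (simp add: NR_def g_def)
  finally show ?thesis .
qed

lemma NRmax_affine:
  assumes mu: "\<mu> \<in> Pc_star" and inv: "A ** Ai = mat 1" "Ai ** A = mat 1" and t: "t \<notin> E"
  shows "NRmax \<rho> (distr \<mu> borel (Tm A y)) t = NRmax \<rho> \<mu> t"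
proof -
  have "NRmax \<rho> (distr \<mu> borel (Tm A y)) t = (SUP \<theta>\<in>sphere 0 1. NR \<rho> (phi A \<theta>) \<mu> t)"
    unfolding NRmax_def by (rule SUP_cong) (use NR_affine[OF mu inv _ t] in auto)
  also have "\<dots> = (SUP \<theta>\<in>phi A ` sphere 0 1. NR \<rho> \<theta> \<mu> t)" by (simp add: image_comp)
  also have "\<dots> = NRmax \<rho> \<mu> t" unfolding NRmax_def phi_sphere[OF inv] ..
  finally show ?thesis .
qed

end


lemma Linf_int:
  assumes "prob_space \<rho>" "h \<in> Linf \<rho>" "s \<in> borel_measurable \<rho>" "\<And>t. \<bar>s t\<bar> \<le> 1"
  shows "integrable \<rho> (\<lambda>t. h t * s t)"
proof -
  interpret P: prob_space \<rho> by fact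
  obtain C where C: "AE x in \<rho>. \<bar>h x\<bar> \<le> C" and hm: "h \<in> borel_measurable \<rho>" using assms(2) by (auto simp: Linf_def)
  show ?thesis
  proof (rule P.integrable_const_bound[of _ C])
    show "AE x in \<rho>. norm (h x * s x) \<le> C" using C
    proof eventually_elim
      fix x assume "\<bar>h x\<bar> \<le> C"
      then show "norm (h x * s x) \<le> C" using assms(4)[of x] mult_mono[of "\<bar>h x\<bar>" C "\<bar>s x\<bar>" 1]
        by (simp add: abs_mult)
    qed
  qed (use hm assms(3) in measurable)
qed

theorem theorem9:
  fixes \<rho> :: "real measure" and \<mu>0 \<nu>0 :: "(real^2) measure"
  assumes "prob_space \<rho>" and "sets \<rho> = sets borel"
    and "\<forall>t. emeasure \<rho> {t} = 0"
    and "\<mu>0 \<in> Pc_star" and "\<nu>0 \<in> Pc_star"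
    and "\<not> (AE t in \<rho>. NRmax \<rho> \<mu>0 t = NRmax \<rho> \<nu>0 t)"
  shows "affine_orbit \<mu>0 \<subseteq> Pc_star \<and> affine_orbit \<nu>0 \<subseteq> Pc_star \<and>
         Linf_lin_separable \<rho> (NRmax \<rho> ` affine_orbit \<mu>0) (NRmax \<rho> ` affine_orbit \<nu>0)"
proof -
  interpret P: prob_space \<rho> by fact
  interpret R: refm \<rho>
  proof
    show "sets \<rho> = sets borel" by fact
    fix t show "measure \<rho> {t} = 0" using assms(3) by (simp add: measure_def)
  qed
  have sb: "sets \<rho> = sets borel" by fact
  have mr: "h \<in> borel_measurable \<rho>" if "h \<in> borel_measurable borel" for h :: "real \<Rightarrow> real"
    using that by (subst measurable_cong_sets[OF sb refl])
  have O1: "affine_orbit \<mu>0 \<subseteq> Pc_star" by (rule orbit_Pc_star[OF assms(4)])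
  have O2: "affine_orbit \<nu>0 \<subseteq> Pc_star" by (rule orbit_Pc_star[OF assms(5)])
  have AEorb: "AE t in \<rho>. NRmax \<rho> \<mu>' t = NRmax \<rho> \<mu> t" if mu: "\<mu> \<in> Pc_star" and orb: "\<mu>' \<in> affine_orbit \<mu>" for \<mu> \<mu>'
  proof -
    obtain A y where Ay: "\<mu>' = distr \<mu> borel (\<lambda>x. A *v x + y)" "invertible (A::real^2^2)"
      using orb by (auto simp: affine_orbit_def)
    then obtain Ai where inv: "A ** Ai = mat 1" "Ai ** A = mat 1" by (auto simp: invertible_def)
    have "(\<lambda>x. A *v x + y) = Tm A y" by (simp add: Tm_def fun_eq_iff)
    then have mu': "\<mu>' = distr \<mu> borel (Tm A y)" using Ay(1) by simp
    show ?thesis using R.AE_notE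
      by eventually_elim (simp add: mu' R.NRmax_affine[OF mu inv])
  qed
  define f where "f = NRmax \<rho> \<mu>0"
  define g where "g = NRmax \<rho> \<nu>0"
  have fL: "f \<in> Linf \<rho>" unfolding f_def by (rule R.NRmax_in_Linf[OF assms(4)])
  have gL: "g \<in> Linf \<rho>" unfolding g_def by (rule R.NRmax_in_Linf[OF assms(5)])
  have fm[measurable]: "f \<in> borel_measurable \<rho>" using fL by (simp add: Linf_def)
  have gm[measurable]: "g \<in> borel_measurable \<rho>" using gL by (simp add: Linf_def)
  define s where "s t = (if g t < f t then 1 else if f t < g t then -1 else (0::real))" for t
  have sm[measurable]: "s \<in> borel_measurable \<rho>" unfolding s_def by measurable
  have s1: "\<bar>s t\<bar> \<le> 1" for t by (simp add: s_def)
  define L where "L h = (\<integral>t. h t * s t \<partial>\<rho>)" for h :: "real \<Rightarrow> real"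
  have Lint: "integrable \<rho> (\<lambda>t. h t * s t)" if "h \<in> Linf \<rho>" for h
    by (rule Linf_int[OF assms(1) that sm s1])
  have LF: "Linf_functional \<rho> L"
    unfolding Linf_functional_def
  proof (intro conjI ballI allI impI)
    fix h1 h2 assume "h1 \<in> Linf \<rho>" "h2 \<in> Linf \<rho>"
    then show "L (\<lambda>x. h1 x + h2 x) = L h1 + L h2"
      using Lint[of h1] Lint[of h2] by (simp add: L_def distrib_right)
  next
    fix h c assume "h \<in> Linf \<rho>"
    show "L (\<lambda>x. c * h x) = c * L h" by (simp add: L_def mult.assoc)
  next
    show "\<exists>K. \<forall>f\<in>Linf \<rho>. \<forall>B. (AE x in \<rho>. \<bar>f x\<bar> \<le> B) \<longrightarrow> \<bar>L f\<bar> \<le> K * B"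
    proof (intro exI[of _ 1] ballI allI impI)
      fix h B assume h: "h \<in> Linf \<rho>" and hB: "AE x in \<rho>. \<bar>h x\<bar> \<le> B"
      have "\<bar>L h\<bar> \<le> (\<integral>t. \<bar>h t * s t\<bar> \<partial>\<rho>)" unfolding L_def by (rule integral_abs_bound)
      also have "\<dots> \<le> B"
      proof (rule P.integral_le_const)
        show "integrable \<rho> (\<lambda>t. \<bar>h t * s t\<bar>)" using Lint[OF h] by simp
        show "AE x in \<rho>. \<bar>h x * s x\<bar> \<le> B" using hB
        proof eventually_elim
          fix x assume "\<bar>h x\<bar> \<le> B"
          then show "\<bar>h x * s x\<bar> \<le> B" using s1[of x] mult_mono[of "\<bar>h x\<bar>" B "\<bar>s x\<bar>" 1]
            by (simp add: abs_mult)
        qed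
      qed
      finally show "\<bar>L h\<bar> \<le> 1 * B" by simp
    qed
  qed
  have Lcong: "L h = L k" if "h \<in> Linf \<rho>" "k \<in> Linf \<rho>" "AE t in \<rho>. h t = k t" for h k
    unfolding L_def using Lint[OF that(1)] Lint[OF that(2)] that(3)
    by (intro integral_cong_AE) auto
  have diff: "L f - L g = (\<integral>t. \<bar>f t - g t\<bar> \<partial>\<rho>)"
  proof -
    have "L f - L g = (\<integral>t. f t * s t - g t * s t \<partial>\<rho>)"
      unfolding L_def using Lint[OF fL] Lint[OF gL] by simp
    also have "\<dots> = (\<integral>t. \<bar>f t - g t\<bar> \<partial>\<rho>)"
      by (rule Bochner_Integration.integral_cong) (auto simp: s_def)
    finally show ?thesis .
  qed
  have pos: "L f - L g > 0"
  proof -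
    have ia: "integrable \<rho> (\<lambda>t. \<bar>f t - g t\<bar>)"
    proof -
      have "integrable \<rho> (\<lambda>t. f t * s t - g t * s t)" using Lint[OF fL] Lint[OF gL] by simp
      moreover have "(\<lambda>t. f t * s t - g t * s t) = (\<lambda>t. \<bar>f t - g t\<bar>)" by (auto simp: s_def fun_eq_iff)
      ultimately show ?thesis by simp
    qed
    have "(\<integral>t. \<bar>f t - g t\<bar> \<partial>\<rho>) \<noteq> 0"
    proof
      assume "(\<integral>t. \<bar>f t - g t\<bar> \<partial>\<rho>) = 0"
      then have "AE t in \<rho>. \<bar>f t - g t\<bar> = 0" using integral_nonneg_eq_0_iff_AE[OF ia] by simp
      then have "AE t in \<rho>. f t = g t" by simp
      then show False using assms(6) by (simp add: f_def g_def)
    qed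
    moreover have "(\<integral>t. \<bar>f t - g t\<bar> \<partial>\<rho>) \<ge> 0" by simp
    ultimately show ?thesis using diff by linarith
  qed
  have LA: "L a = L f" if am: "a \<in> NRmax \<rho> ` affine_orbit \<mu>0" for a
  proof -
    obtain \<mu>' where m': "\<mu>' \<in> affine_orbit \<mu>0" "a = NRmax \<rho> \<mu>'" using am by blast
    have "a \<in> Linf \<rho>" using m' O1 R.NRmax_in_Linf by auto
    moreover have "AE t in \<rho>. a t = f t" using AEorb[OF assms(4) m'(1)] m'(2) by (simp add: f_def)
    ultimately show ?thesis using Lcong fL by blast
  qed
  have LB: "L b = L g" if am: "b \<in> NRmax \<rho> ` affine_orbit \<nu>0" for b
  proof -
    obtain \<mu>' where m': "\<mu>' \<in> affine_orbit \<nu>0" "b = NRmax \<rho> \<mu>'" using am by blast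
    have "b \<in> Linf \<rho>" using m' O2 R.NRmax_in_Linf by auto
    moreover have "AE t in \<rho>. b t = g t" using AEorb[OF assms(5) m'(1)] m'(2) by (simp add: g_def)
    ultimately show ?thesis using Lcong gL by blast
  qed
  have sep: "Linf_lin_separable \<rho> (NRmax \<rho> ` affine_orbit \<mu>0) (NRmax \<rho> ` affine_orbit \<nu>0)"
    unfolding Linf_lin_separable_def
  proof (intro conjI)
    show "NRmax \<rho> ` affine_orbit \<mu>0 \<subseteq> Linf \<rho>" using O1 R.NRmax_in_Linf by auto
    show "NRmax \<rho> ` affine_orbit \<nu>0 \<subseteq> Linf \<rho>" using O2 R.NRmax_in_Linf by auto
    show "\<exists>L c. Linf_functional \<rho> L \<and> (\<forall>a\<in>NRmax \<rho> ` affine_orbit \<mu>0. c < L a) \<and> (\<forall>b\<in>NRmax \<rho> ` affine_orbit \<nu>0. L b < c)"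
      using LF LA LB pos by (intro exI[of _ L] exI[of _ "(L f + L g) / 2"]) auto
  qed
  show ?thesis using O1 O2 sep by blast
qed

end
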